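(* Let $b>0$ and $h:\mathbb{R}_{\ge0}\to\mathbb{R}$, $h(x)=x$ if $x\le b$ and $h(x)=0$ otherwise. For $j=1,\dots,n$ let $\Theta_j$ be a positive random variable with continuous density $\theta_j$ on $(0,\infty)$ such that $\int_z^\infty\theta_j(y)/y\,dy<\infty$ for all $z>0$, and define for $z>0$ \[ \Omega_j(z)=\int_z^\infty\frac{\theta_j(y)}{y}\,dy-\theta_j(z). \] Let $\mathcal{I}:\mathbb{R}^n_{\ge0}\to\mathbb{R}^n_{>0}$ be differentiable (not necessarily monotone) and define $f_j(p)=\mathbb{E}_{\Theta_j}\big[h(\mathcal{I}_j(p)/\Theta_j)\big]$, $f=(f_1,\dots,f_n)^T$. Then for every $p$, \[ |||\nabla f(p)|||_\infty\le\max_i\big|\Omega_i\big(\mathcal{I}_i(p)/b\big)\big|\ |||\nabla\mathcal{I}(p)|||_\infty . \]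
   Context: Gradient convention: $[\nabla f(p)]_{ij}=\partial f_j(p)/\partial p_i$; $|||A|||_\infty=\max_i\sum_j|A_{ij}|$. *)

theory Defs
  imports "HOL-Probability.Probability"
begin

definition hcut :: "real \<Rightarrow> real \<Rightarrow> real" where
  "hcut b x = (if x \<le> b then x else 0)"

definition Omega :: "(real \<Rightarrow> real) \<Rightarrow> real \<Rightarrow> real" where
  "Omega \<theta> z = (LINT y:{z..}|lborel. \<theta> y / y) - \<theta> z"

text \<open>Infinity-norm of the gradient of a map with derivative F, where the gradient
  has entries [grad]_(i,j) = d F_j / d p_i = (F (axis i 1)) $ j; the norm is
  the maximum over rows i of the row sums over j.\<close>
definition grad_inf_norm :: "(real^'n \<Rightarrow> real^'n) \<Rightarrow> real" where
  "grad_inf_norm F = Max (range (\<lambda>i. \<Sum>j\<in>UNIV. \<bar>F (axis i 1) $ j\<bar>))"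

definition orthant :: "(real^'n) set" where
  "orthant = {p. \<forall>i. p $ i \<ge> 0}"

end

theory Submission imports Defs begin

lemma L_deriv:
  fixes \<theta> :: "real \<Rightarrow> real"
  assumes cont: "continuous_on {0<..} \<theta>"
    and int: "\<And>z. z > 0 \<Longrightarrow> set_integrable lborel {z..} (\<lambda>y. \<theta> y / y)"
    and z0: "z0 > 0"
  shows "((\<lambda>z. LINT y:{z..}|lborel. \<theta> y / y) has_real_derivative (- (\<theta> z0 / z0))) (at z0)"
proof -
  define \<phi> where "\<phi> = (\<lambda>y. \<theta> y / y)"
  define a where "a = z0 / 2"
  have a: "a > 0" "a < z0" using z0 by (auto simp: a_def)
  have contphi: "continuous_on {a..2*z0} \<phi>"
    unfolding \<phi>_def
    by (intro continuous_intros continuous_on_subset[OF cont]) (use a in auto)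
  have eq: "(LINT y:{z..}|lborel. \<phi> y) = (LINT y:{a..}|lborel. \<phi> y) - integral {a..z} \<phi>"
    if z: "z \<in> {a<..}" for z
  proof -
    have ia: "set_integrable lborel {a..} \<phi>" using int[OF a(1)] by (simp add: \<phi>_def)
    have i1: "set_integrable lborel {a..z} \<phi>"
      by (rule set_integrable_subset[OF ia]) auto
    have i2: "set_integrable lborel {z<..} \<phi>"
      by (rule set_integrable_subset[OF ia]) (use z in auto)
    have i3: "set_integrable lborel {z..} \<phi>"
      by (rule set_integrable_subset[OF ia]) (use z in auto)
    have "{a..} = {a..z} \<union> {z<..}" using z by auto
    then have "(LINT y:{a..}|lborel. \<phi> y) = (LINT y:{a..z}|lborel. \<phi> y) + (LINT y:{z<..}|lborel. \<phi> y)"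
      using set_integral_Un[OF _ i1 i2] by (simp add: disjoint_iff)
    moreover have "(LINT y:{a..z}|lborel. \<phi> y) = integral {a..z} \<phi>"
      using set_borel_integral_eq_integral(2)[OF i1] .
    moreover have "(LINT y:{z..}|lborel. \<phi> y) = (LINT y:{z<..}|lborel. \<phi> y)"
    proof (rule set_integral_cong_set)
      show "set_borel_measurable lborel {z..} \<phi>"
        using i3 by (simp add: set_borel_measurable_def set_integrable_def)
      show "set_borel_measurable lborel {z<..} \<phi>"
        using i2 by (simp add: set_borel_measurable_def set_integrable_def)
      show "AE x in lborel. (x \<in> {z<..}) = (x \<in> {z..})"
        using AE_lborel_singleton[of z] by eventually_elim auto
    qed
    ultimately show ?thesis by simp
  qed
  have d1: "((\<lambda>z. integral {a..z} \<phi>) has_real_derivative \<phi> z0) (at z0 within {a..2*z0})"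
    by (rule integral_has_real_derivative[OF contphi]) (use a in auto)
  then have d2: "((\<lambda>z. integral {a..z} \<phi>) has_real_derivative \<phi> z0) (at z0)"
    using at_within_Icc_at[of a z0 "2*z0"] a z0 by simp
  have d3: "((\<lambda>z. (LINT y:{a..}|lborel. \<phi> y) - integral {a..z} \<phi>) has_real_derivative - \<phi> z0) (at z0)"
    using d2 by (auto intro!: derivative_eq_intros)
  have "((\<lambda>z. LINT y:{z..}|lborel. \<phi> y) has_real_derivative - \<phi> z0) (at z0)"
    by (rule has_field_derivative_transform_within_open[OF d3, of "{a<..}"]) (use a eq in auto)
  then show ?thesis by (simp add: \<phi>_def)
qed

lemma G_eq:
  fixes \<theta> :: "real \<Rightarrow> real" and X :: "'a \<Rightarrow> real"
  assumes "b > 0"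
    and d: "distributed M lborel X (\<lambda>y. ennreal (\<theta> y))"
    and pos: "\<And>\<omega>. \<omega> \<in> space M \<Longrightarrow> X \<omega> > 0"
    and th: "\<And>y. y > 0 \<Longrightarrow> \<theta> y \<ge> 0"
    and x: "x > 0"
  shows "integral\<^sup>L M (\<lambda>\<omega>. hcut b (x / X \<omega>)) = x * (LINT y:{x/b..}|lborel. \<theta> y / y)"
proof -
  define t where "t = (\<lambda>y. max 0 (\<theta> y))"
  have dt: "distributed M lborel X (\<lambda>y. ennreal (t y))"
    using d by (simp add: t_def ennreal_max_0)
  have t0: "\<And>y. 0 \<le> t y" by (simp add: t_def)
  have [measurable]: "t \<in> borel_measurable lborel"
    using distributed_real_measurable[OF _ dt] t0 by blast
  have Xm[measurable]: "X \<in> measurable M lborel" using d by (simp add: distributed_def)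
  have hm[measurable]: "(\<lambda>y. hcut b (x / y)) \<in> borel_measurable lborel"
    unfolding hcut_def by measurable
  have 1: "integral\<^sup>L M (\<lambda>\<omega>. hcut b (x / X \<omega>)) = (\<integral>y. t y * hcut b (x / y) \<partial>lborel)"
    using distributed_integral[OF dt hm] t0 by simp
  have "(\<integral>\<^sup>+y. ennreal (t y) * indicator {..0} y \<partial>lborel) = emeasure M (X -` {..0} \<inter> space M)"
    using distributed_emeasure[OF dt, of "{..0}"] by simp
  also have "X -` {..0} \<inter> space M = {}" using pos by force
  finally have "(\<integral>\<^sup>+y. ennreal (t y) * indicator {..0} y \<partial>lborel) = 0" by simp
  then have "AE y in lborel. ennreal (t y) * indicator {..0} y = 0"
    by (subst (asm) nn_integral_0_iff_AE) auto
  then have AE: "AE y in lborel. y \<le> 0 \<longrightarrow> t y = 0"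
    proof eventually_elim
    case (elim y)
    then show ?case using t0[of y] by (cases "y \<le> 0") (auto simp: indicator_def)
  qed
  have 2: "(\<integral>y. t y * hcut b (x / y) \<partial>lborel) = (\<integral>y. (indicator {x/b..} y *\<^sub>R (t y / y)) * x \<partial>lborel)"
  proof (rule integral_cong_AE)
    show "AE y in lborel. t y * hcut b (x / y) = indicator {x / b..} y *\<^sub>R (t y / y) * x"
      using AE
    proof eventually_elim
      case (elim y)
      show ?case
      proof (cases "y > 0")
        case True
        have "(x / y \<le> b) = (x / b \<le> y)" using True \<open>b > 0\<close>
          by (simp add: field_simps)
        then show ?thesis using True by (auto simp: hcut_def indicator_def)
      next
        case False
        then have "\<not> x / b \<le> y" using x \<open>b > 0\<close> by (smt (verit) divide_pos_pos)
        then show ?thesis using False elim by (simp add: indicator_def)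
      qed
    qed
  qed measurable
  also have "\<dots> = (LINT y:{x/b..}|lborel. t y / y) * x"
    unfolding set_lebesgue_integral_def by (rule integral_mult_left_zero)
  also have "(LINT y:{x/b..}|lborel. t y / y) = (LINT y:{x/b..}|lborel. \<theta> y / y)"
  proof (rule set_lebesgue_integral_cong)
    show "\<forall>y. y \<in> {x / b..} \<longrightarrow> t y / y = \<theta> y / y"
    proof (intro allI impI)
      fix y assume "y \<in> {x / b..}"
      then have "y > 0" using x \<open>b > 0\<close> by (smt (verit) atLeast_iff divide_pos_pos)
      then show "t y / y = \<theta> y / y" using th[of y] by (simp add: t_def)
    qed
  qed simp
  finally show ?thesis using 1 by simp
qed

lemma G_deriv:
  fixes \<theta> :: "real \<Rightarrow> real" and X :: "'a \<Rightarrow> real"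
  assumes b: "b > 0"
    and d: "distributed M lborel X (\<lambda>y. ennreal (\<theta> y))"
    and pos: "\<And>\<omega>. \<omega> \<in> space M \<Longrightarrow> X \<omega> > 0"
    and cont: "continuous_on {0<..} \<theta>"
    and th: "\<And>y. y > 0 \<Longrightarrow> \<theta> y \<ge> 0"
    and int: "\<And>z. z > 0 \<Longrightarrow> set_integrable lborel {z..} (\<lambda>y. \<theta> y / y)"
    and x0: "x0 > 0"
  shows "((\<lambda>x. integral\<^sup>L M (\<lambda>\<omega>. hcut b (x / X \<omega>))) has_real_derivative Omega \<theta> (x0/b)) (at x0)"
proof -
  define L where "L = (\<lambda>z. LINT y:{z..}|lborel. \<theta> y / y)"
  have z0: "x0 / b > 0" using x0 b by simp
  have dL0: "(L has_real_derivative (- (\<theta> (x0/b) / (x0/b)))) (at (x0/b))"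
    unfolding L_def by (rule L_deriv[OF cont int z0])
  have dL: "((\<lambda>x. L (x/b)) has_real_derivative (- (\<theta> (x0/b) / (x0/b))) * (1/b)) (at x0)"
    using DERIV_chain2[where f=L and g="\<lambda>x. x/b" and x=x0 and s=UNIV, OF dL0 DERIV_cdivide[OF DERIV_ident, of b]]
    by simp
  have dP: "((\<lambda>x. x * L (x/b)) has_real_derivative 1 * L (x0/b) + (- (\<theta> (x0/b) / (x0/b))) * (1/b) * x0) (at x0)"
    by (rule DERIV_mult[OF DERIV_ident dL])
  have val: "1 * L (x0/b) + (- (\<theta> (x0/b) / (x0/b))) * (1/b) * x0 = Omega \<theta> (x0/b)"
    using x0 b by (simp add: Omega_def L_def field_simps)
  show ?thesis
    by (rule has_field_derivative_transform_within_open[OF dP[unfolded val], of "{0<..}"])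
       (use x0 G_eq[OF b d pos th] in \<open>auto simp: L_def\<close>)
qed

theorem mainTheorem6:
  fixes M :: "'a measure"
    and b :: real
    and \<Theta> :: "'n::finite \<Rightarrow> 'a \<Rightarrow> real"
    and \<theta> :: "'n \<Rightarrow> real \<Rightarrow> real"
    and I :: "real^'n \<Rightarrow> real^'n"
    and I' :: "real^'n \<Rightarrow> real^'n \<Rightarrow> real^'n"
    and f :: "real^'n \<Rightarrow> real^'n"
    and p :: "real^'n"
  assumes "prob_space M"
    and "b > 0"
    and "\<And>j. distributed M lborel (\<Theta> j) (\<lambda>y. ennreal (\<theta> j y))"
    and "\<And>j \<omega>. \<omega> \<in> space M \<Longrightarrow> \<Theta> j \<omega> > 0"
    and "\<And>j. continuous_on {0<..} (\<theta> j)"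
    and "\<And>j y. y > 0 \<Longrightarrow> \<theta> j y \<ge> 0"
    and "\<And>j z. z > 0 \<Longrightarrow> set_integrable lborel {z..} (\<lambda>y. \<theta> j y / y)"
    and "\<And>q j. q \<in> orthant \<Longrightarrow> I q $ j > 0"
    and "\<And>q. q \<in> orthant \<Longrightarrow> (I has_derivative I' q) (at q within orthant)"
    and "\<And>q. f q = (\<chi> j. integral\<^sup>L M (\<lambda>\<omega>. hcut b (I q $ j / \<Theta> j \<omega>)))"
    and "p \<in> orthant"
  shows "(\<exists>F. (f has_derivative F) (at p within orthant)) \<and>
         (\<forall>F. (f has_derivative F) (at p within orthant) \<longrightarrow>
            grad_inf_norm F \<le> Max (range (\<lambda>i. \<bar>Omega (\<theta> i) (I p $ i / b)\<bar>)) * grad_inf_norm (I' p))"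
proof -
  note A = assms
  define D where "D = (\<lambda>j. Omega (\<theta> j) (I p $ j / b))"
  define G where "G = (\<lambda>j x. integral\<^sup>L M (\<lambda>\<omega>. hcut b (x / \<Theta> j \<omega>)))"
  define F0 where "F0 = (\<lambda>v. \<chi> j. D j * (I' p v $ j))"
  have dG: "(G j has_real_derivative D j) (at (I p $ j))" for j
    unfolding G_def D_def
    by (rule G_deriv[OF A(2,3,4,5,6,7)]) (use A(8)[OF A(11)] in auto)
  have dI: "(I has_derivative I' p) (at p within orthant)" using A(9)[OF A(11)] .
  have dIj: "((\<lambda>q. I q $ j) has_derivative (\<lambda>v. I' p v $ j)) (at p within orthant)" for j
    by (rule bounded_linear.has_derivative[OF bounded_linear_vec_nth dI])
  have dcomp: "((\<lambda>q. f q $ j) has_derivative (\<lambda>v. D j * (I' p v $ j))) (at p within orthant)" for j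
  proof -
    have "((\<lambda>q. G j (I q $ j)) has_derivative (\<lambda>v. D j * (I' p v $ j))) (at p within orthant)"
      using has_derivative_compose[OF dIj dG[unfolded has_field_derivative_def]] .
    moreover have "(\<lambda>q. f q $ j) = (\<lambda>q. G j (I q $ j))"
      by (simp add: A(10) G_def)
    ultimately show ?thesis by simp
  qed
  have dF: "(f has_derivative F0) (at p within orthant)"
  proof (subst has_derivative_componentwise_within, intro ballI)
    fix i :: "real^'n" assume "i \<in> Basis"
    then obtain j where i: "i = axis j 1" by (auto simp: Basis_vec_def)
    show "((\<lambda>x. f x \<bullet> i) has_derivative (\<lambda>x. F0 x \<bullet> i)) (at p within orthant)"
      using dcomp[of j] by (simp add: i F0_def flip: cart_eq_inner_axis)
  qed
  have uniq: "F = F0" if "(f has_derivative F) (at p within orthant)" for F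
  proof (rule frechet_derivative_unique_within[OF that dF])
    fix i :: "real^'n" and e :: real assume "i \<in> Basis" "e > 0"
    then obtain j where i: "i = axis j 1" by (auto simp: Basis_vec_def)
    show "\<exists>d. 0 < \<bar>d\<bar> \<and> \<bar>d\<bar> < e \<and> p + d *\<^sub>R i \<in> orthant"
    proof (intro exI conjI)
      show "0 < \<bar>e/2\<bar>" "\<bar>e/2\<bar> < e" using \<open>e > 0\<close> by auto
      show "p + (e/2) *\<^sub>R i \<in> orthant"
        using A(11) \<open>e > 0\<close> by (auto simp: orthant_def i axis_def)
    qed
  qed
  define Mx where "Mx = Max (range (\<lambda>i. \<bar>Omega (\<theta> i) (I p $ i / b)\<bar>))"
  have DM: "\<bar>D j\<bar> \<le> Mx" for j unfolding Mx_def D_def by (rule Max_ge) auto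
  have M0: "0 \<le> Mx" using DM[of undefined] by linarith
  have "grad_inf_norm F0 \<le> Mx * grad_inf_norm (I' p)"
    unfolding grad_inf_norm_def
  proof (rule Max.boundedI)
    show "finite (range (\<lambda>i. \<Sum>j\<in>UNIV. \<bar>F0 (axis i 1) $ j\<bar>))" by simp
    show "range (\<lambda>i. \<Sum>j\<in>UNIV. \<bar>F0 (axis i 1) $ j\<bar>) \<noteq> {}" by simp
    fix a assume "a \<in> range (\<lambda>i. \<Sum>j\<in>UNIV. \<bar>F0 (axis i 1) $ j\<bar>)"
    then obtain i where a: "a = (\<Sum>j\<in>UNIV. \<bar>F0 (axis i 1) $ j\<bar>)" by auto
    have "a = (\<Sum>j\<in>UNIV. \<bar>D j\<bar> * \<bar>I' p (axis i 1) $ j\<bar>)"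
      by (simp add: a F0_def abs_mult)
    also have "\<dots> \<le> (\<Sum>j\<in>UNIV. Mx * \<bar>I' p (axis i 1) $ j\<bar>)"
      by (intro sum_mono mult_right_mono DM) auto
    also have "\<dots> = Mx * (\<Sum>j\<in>UNIV. \<bar>I' p (axis i 1) $ j\<bar>)"
      by (simp add: sum_distrib_left)
    also have "\<dots> \<le> Mx * Max (range (\<lambda>i. \<Sum>j\<in>UNIV. \<bar>I' p (axis i 1) $ j\<bar>))"
      by (intro mult_left_mono M0 Max_ge) auto
    finally show "a \<le> Mx * Max (range (\<lambda>i. \<Sum>j\<in>UNIV. \<bar>I' p (axis i 1) $ j\<bar>))" .
  qed
  then show ?thesis
    unfolding Mx_def using dF uniq by blast
qed

end
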